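(* Let $n\in\mathbb{N}$, $n\geq 1$. For each $k\in\{0,1,2,\ldots,n^2\}$ there exists a polyanalytic polynomial of degree $n$ with exactly $k$ distinct zeros, and there exists a polyanalytic polynomial of degree $n$ with infinitely many zeros.
   Context: A polyanalytic polynomial is a function $\mathbb{C}\to\mathbb{C}$ of the form $P(z,\bar z)=\sum_{j+k\le n}\alpha_{j,k} z^j \bar z^{k}$ with complex coefficients (a polynomial in $z$ and $\bar z$). Its degree is the largest $j+k$ with $\alpha_{j,k}\neq 0$. A zero of $P$ is a point $z\in\mathbb{C}$ with $P(z,\bar z)=0$. *)

theory Defs
  imports "HOL-Analysis.Analysis"
begin

text \<open>A polyanalytic polynomial is represented by its coefficient function
  a :: nat \<Rightarrow> nat \<Rightarrow> complex, where a j k is the coefficient of z^j (conj z)^k.\<close>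

definition polyan_support :: "(nat \<Rightarrow> nat \<Rightarrow> complex) \<Rightarrow> (nat \<times> nat) set" where
  "polyan_support a = {(j,k). a j k \<noteq> 0}"

definition is_polyan_coeffs :: "(nat \<Rightarrow> nat \<Rightarrow> complex) \<Rightarrow> bool" where
  "is_polyan_coeffs a \<longleftrightarrow> finite (polyan_support a)"

definition polyan_eval :: "(nat \<Rightarrow> nat \<Rightarrow> complex) \<Rightarrow> complex \<Rightarrow> complex" where
  "polyan_eval a z = (\<Sum>(j,k)\<in>polyan_support a. a j k * z ^ j * (cnj z) ^ k)"

definition polyan_degree :: "(nat \<Rightarrow> nat \<Rightarrow> complex) \<Rightarrow> nat" where
  "polyan_degree a = Max (insert 0 ((\<lambda>(j,k). j + k) ` polyan_support a))"

definition polyan_zeros :: "(nat \<Rightarrow> nat \<Rightarrow> complex) \<Rightarrow> complex set" where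
  "polyan_zeros a = {z. polyan_eval a z = 0}"

end

theory Submission
  imports Defs
begin

definition tri :: "nat \<Rightarrow> (nat \<times> nat) set" where
  "tri d = {(j,k). j + k \<le> d}"

lemma finite_tri: "finite (tri d)"
  by (rule finite_subset[of _ "{..d} \<times> {..d}"]) (auto simp: tri_def)

definition PA :: "nat \<Rightarrow> (complex \<Rightarrow> complex) \<Rightarrow> bool" where
  "PA d F \<longleftrightarrow> (\<exists>c. \<forall>z. F z = (\<Sum>p\<in>tri d. c (fst p) (snd p) * z ^ fst p * cnj z ^ snd p))"

lemma PA_mono:
  assumes "PA d F" "d \<le> e" shows "PA e F"
proof -
  obtain c where c: "\<And>z. F z = (\<Sum>p\<in>tri d. c (fst p) (snd p) * z ^ fst p * cnj z ^ snd p)"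
    using assms(1) unfolding PA_def by blast
  define c' where "c' j k = (if j + k \<le> d then c j k else 0)" for j k
  have "F z = (\<Sum>p\<in>tri e. c' (fst p) (snd p) * z ^ fst p * cnj z ^ snd p)" for z
  proof -
    have sub: "tri d \<subseteq> tri e" using assms(2) by (auto simp: tri_def)
    have "(\<Sum>p\<in>tri e. c' (fst p) (snd p) * z ^ fst p * cnj z ^ snd p)
        = (\<Sum>p\<in>tri d. c' (fst p) (snd p) * z ^ fst p * cnj z ^ snd p)"
      by (rule sum.mono_neutral_right[OF finite_tri sub]) (auto simp: tri_def c'_def)
    also have "\<dots> = (\<Sum>p\<in>tri d. c (fst p) (snd p) * z ^ fst p * cnj z ^ snd p)"
      by (rule sum.cong) (auto simp: tri_def c'_def)
    finally show ?thesis using c by simp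
  qed
  then show ?thesis unfolding PA_def by blast
qed

lemma PA_add:
  assumes "PA d F" "PA d G" shows "PA d (\<lambda>z. F z + G z)"
proof -
  obtain c where c: "\<And>z. F z = (\<Sum>p\<in>tri d. c (fst p) (snd p) * z ^ fst p * cnj z ^ snd p)"
    using assms(1) unfolding PA_def by blast
  obtain c2 where c2: "\<And>z. G z = (\<Sum>p\<in>tri d. c2 (fst p) (snd p) * z ^ fst p * cnj z ^ snd p)"
    using assms(2) unfolding PA_def by blast
  define c3 where "c3 j k = c j k + c2 j k" for j k
  have "F z + G z = (\<Sum>p\<in>tri d. c3 (fst p) (snd p) * z ^ fst p * cnj z ^ snd p)" for z
    unfolding c c2 sum.distrib[symmetric] by (rule sum.cong) (auto simp: algebra_simps c3_def)
  then show ?thesis unfolding PA_def by blast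
qed

lemma PA_diff:
  assumes "PA d F" "PA d G" shows "PA d (\<lambda>z. F z - G z)"
proof -
  obtain c where c: "\<And>z. F z = (\<Sum>p\<in>tri d. c (fst p) (snd p) * z ^ fst p * cnj z ^ snd p)"
    using assms(1) unfolding PA_def by blast
  obtain c2 where c2: "\<And>z. G z = (\<Sum>p\<in>tri d. c2 (fst p) (snd p) * z ^ fst p * cnj z ^ snd p)"
    using assms(2) unfolding PA_def by blast
  define c3 where "c3 j k = c j k - c2 j k" for j k
  have "F z - G z = (\<Sum>p\<in>tri d. c3 (fst p) (snd p) * z ^ fst p * cnj z ^ snd p)" for z
    unfolding c c2 sum_subtractf[symmetric] by (rule sum.cong) (auto simp: algebra_simps c3_def)
  then show ?thesis unfolding PA_def by blast
qed

lemma tri_0: "tri 0 = {(0,0)}" by (auto simp: tri_def)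
lemma tri_1: "tri 1 = {(0,0),(1,0),(0,1)}" by (auto simp: tri_def)

lemma PA_const: "PA 0 (\<lambda>z. a)"
  unfolding PA_def tri_0 by (rule exI[of _ "\<lambda>_ _. a"]) simp

lemma PA_z: "PA 1 (\<lambda>z. z)"
  unfolding PA_def tri_1 by (rule exI[of _ "\<lambda>j k. if j = 1 \<and> k = 0 then 1 else 0"]) simp

lemma PA_cnj: "PA 1 (\<lambda>z. cnj z)"
  unfolding PA_def tri_1 by (rule exI[of _ "\<lambda>j k. if j = 0 \<and> k = 1 then 1 else 0"]) simp

lemma PA_mult:
  assumes "PA d F" "PA e G" shows "PA (d + e) (\<lambda>z. F z * G z)"
proof -
  obtain c where c: "\<And>z. F z = (\<Sum>p\<in>tri d. c (fst p) (snd p) * z ^ fst p * cnj z ^ snd p)"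
    using assms(1) unfolding PA_def by blast
  obtain c2 where c2: "\<And>z. G z = (\<Sum>p\<in>tri e. c2 (fst p) (snd p) * z ^ fst p * cnj z ^ snd p)"
    using assms(2) unfolding PA_def by blast
  define S where "S = tri d \<times> tri e"
  define h where "h pq = (fst (fst pq) + fst (snd pq), snd (fst pq) + snd (snd pq))" for pq :: "(nat \<times> nat) \<times> (nat \<times> nat)"
  define w where "w pq = c (fst (fst pq)) (snd (fst pq)) * c2 (fst (snd pq)) (snd (snd pq))" for pq :: "(nat \<times> nat) \<times> (nat \<times> nat)"
  define c3 where "c3 j k = (\<Sum>pq\<in>{pq. pq \<in> S \<and> h pq = (j,k)}. w pq)" for j k
  have fS: "finite S" unfolding S_def using finite_tri by simp
  have hS: "h ` S \<subseteq> tri (d + e)" by (auto simp: S_def h_def tri_def)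
  have "F z * G z = (\<Sum>p\<in>tri (d+e). c3 (fst p) (snd p) * z ^ fst p * cnj z ^ snd p)" for z
  proof -
    have "F z * G z = (\<Sum>p\<in>tri d. \<Sum>q\<in>tri e. (c (fst p) (snd p) * z ^ fst p * cnj z ^ snd p) *
               (c2 (fst q) (snd q) * z ^ fst q * cnj z ^ snd q))"
      unfolding c c2 by (rule sum_product)
    also have "\<dots> = (\<Sum>pq\<in>S. w pq * z ^ fst (h pq) * cnj z ^ snd (h pq))"
      unfolding S_def sum.cartesian_product
      by (rule sum.cong) (auto simp: w_def h_def power_add algebra_simps)
    also have "\<dots> = (\<Sum>r\<in>tri (d+e). \<Sum>pq\<in>{pq. pq \<in> S \<and> h pq = r}. w pq * z ^ fst (h pq) * cnj z ^ snd (h pq))"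
      by (rule sum.group[OF fS finite_tri hS, symmetric])
    also have "\<dots> = (\<Sum>r\<in>tri (d+e). c3 (fst r) (snd r) * z ^ fst r * cnj z ^ snd r)"
    proof (rule sum.cong[OF refl])
      fix r assume "r \<in> tri (d+e)"
      have "(\<Sum>pq\<in>{pq. pq \<in> S \<and> h pq = r}. w pq * z ^ fst (h pq) * cnj z ^ snd (h pq))
          = (\<Sum>pq\<in>{pq. pq \<in> S \<and> h pq = r}. w pq * z ^ fst r * cnj z ^ snd r)"
        by (rule sum.cong) auto
      also have "\<dots> = (\<Sum>pq\<in>{pq. pq \<in> S \<and> h pq = r}. w pq) * z ^ fst r * cnj z ^ snd r"
        by (simp add: sum_distrib_right mult.assoc)
      finally show "(\<Sum>pq\<in>{pq. pq \<in> S \<and> h pq = r}. w pq * z ^ fst (h pq) * cnj z ^ snd (h pq))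
          = c3 (fst r) (snd r) * z ^ fst r * cnj z ^ snd r"
        by (simp add: c3_def)
    qed
    finally show ?thesis .
  qed
  then show ?thesis unfolding PA_def by blast
qed

lemma PA_prod:
  assumes "finite I" "\<forall>i\<in>I. PA 1 (f i)"
  shows "PA (card I) (\<lambda>z. \<Prod>i\<in>I. f i z)"
  using assms
proof (induction I rule: finite_induct)
  case empty
  then show ?case using PA_const[of 1] by simp
next
  case (insert x I)
  have "PA (1 + card I) (\<lambda>z. f x z * (\<Prod>i\<in>I. f i z))"
    using PA_mult[of 1 "f x" "card I"] insert by auto
  then show ?case using insert by simp
qed

lemma PA_re: "PA 1 (\<lambda>z. of_real (Re z))"
proof -
  have "PA (1 + 0) (\<lambda>z. z * (1/2))" by (rule PA_mult[OF PA_z PA_const])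
  moreover have "PA (1 + 0) (\<lambda>z. cnj z * (1/2))" by (rule PA_mult[OF PA_cnj PA_const])
  ultimately have "PA 1 (\<lambda>z. z * (1/2) + cnj z * (1/2))" using PA_add[of 1] by simp
  moreover have "(\<lambda>z. z * (1/2) + cnj z * (1/2)) = (\<lambda>z. of_real (Re z))"
    by (rule ext) (simp add: complex_eq_iff)
  ultimately show ?thesis by simp
qed

lemma PA_im: "PA 1 (\<lambda>z. of_real (Im z))"
proof -
  have "PA (1 + 0) (\<lambda>z. z * (-\<i>/2))" by (rule PA_mult[OF PA_z PA_const])
  moreover have "PA (1 + 0) (\<lambda>z. cnj z * (\<i>/2))" by (rule PA_mult[OF PA_cnj PA_const])
  ultimately have "PA 1 (\<lambda>z. z * (-\<i>/2) + cnj z * (\<i>/2))" using PA_add[of 1 "\<lambda>z. z * (-\<i>/2)" "\<lambda>z. cnj z * (\<i>/2)"] by simp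
  moreover have "(\<lambda>z. z * (-\<i>/2) + cnj z * (\<i>/2)) = (\<lambda>z. of_real (Im z))"
    by (rule ext) (simp add: complex_eq_iff)
  ultimately show ?thesis by simp
qed

lemma PA_to_coeffs:
  assumes "PA d F"
  shows "\<exists>a. is_polyan_coeffs a \<and> polyan_degree a \<le> d \<and> (\<forall>z. polyan_eval a z = F z)"
proof -
  obtain c where c: "\<And>z. F z = (\<Sum>p\<in>tri d. c (fst p) (snd p) * z ^ fst p * cnj z ^ snd p)"
    using assms(1) unfolding PA_def by blast
  define a where "a j k = (if j + k \<le> d then c j k else 0)" for j k
  have sub: "polyan_support a \<subseteq> tri d"
    by (auto simp: polyan_support_def tri_def a_def split: if_splits)
  have fin: "is_polyan_coeffs a"
    unfolding is_polyan_coeffs_def using finite_subset[OF sub finite_tri] .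
  have deg: "polyan_degree a \<le> d"
    unfolding polyan_degree_def
    using fin sub by (subst Max_le_iff) (auto simp: is_polyan_coeffs_def tri_def)
  have "polyan_eval a z = F z" for z
  proof -
    have "polyan_eval a z = (\<Sum>p\<in>polyan_support a. a (fst p) (snd p) * z ^ fst p * cnj z ^ snd p)"
      unfolding polyan_eval_def by (rule sum.cong) auto
    also have "\<dots> = (\<Sum>p\<in>tri d. a (fst p) (snd p) * z ^ fst p * cnj z ^ snd p)"
      by (rule sum.mono_neutral_left[OF finite_tri sub]) (auto simp: polyan_support_def)
    also have "\<dots> = F z" unfolding c
      by (rule sum.cong) (auto simp: a_def tri_def)
    finally show ?thesis .
  qed
  then show ?thesis using fin deg by blast
qed

lemma growth:
  assumes "is_polyan_coeffs a" "polyan_degree a \<le> m"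
  shows "norm (polyan_eval a z) \<le> (\<Sum>p\<in>polyan_support a. norm (a (fst p) (snd p))) * (1 + norm z) ^ m"
proof -
  have fin: "finite (polyan_support a)" using assms(1) by (simp add: is_polyan_coeffs_def)
  have le: "fst p + snd p \<le> m" if "p \<in> polyan_support a" for p
  proof -
    have "fst p + snd p \<le> polyan_degree a"
      unfolding polyan_degree_def using fin that
      by (intro Max_ge) (auto intro!: image_eqI[of _ _ p] simp: split_beta)
    then show ?thesis using assms(2) by simp
  qed
  have "norm (polyan_eval a z) = norm (\<Sum>p\<in>polyan_support a. a (fst p) (snd p) * z ^ fst p * cnj z ^ snd p)"
    unfolding polyan_eval_def by (intro arg_cong[where f=norm] sum.cong) auto
  also have "\<dots> \<le> (\<Sum>p\<in>polyan_support a. norm (a (fst p) (snd p) * z ^ fst p * cnj z ^ snd p))"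
    by (rule norm_sum)
  also have "\<dots> \<le> (\<Sum>p\<in>polyan_support a. norm (a (fst p) (snd p)) * (1 + norm z) ^ m)"
  proof (rule sum_mono)
    fix p assume p: "p \<in> polyan_support a"
    have "norm (a (fst p) (snd p) * z ^ fst p * cnj z ^ snd p) = norm (a (fst p) (snd p)) * norm z ^ (fst p + snd p)"
      by (simp add: norm_mult norm_power power_add)
    also have "\<dots> \<le> norm (a (fst p) (snd p)) * (1 + norm z) ^ (fst p + snd p)"
      by (intro mult_left_mono power_mono) auto
    also have "\<dots> \<le> norm (a (fst p) (snd p)) * (1 + norm z) ^ m"
      by (intro mult_left_mono power_increasing le[OF p]) auto
    finally show "norm (a (fst p) (snd p) * z ^ fst p * cnj z ^ snd p) \<le> norm (a (fst p) (snd p)) * (1 + norm z) ^ m" .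
  qed
  also have "\<dots> = (\<Sum>p\<in>polyan_support a. norm (a (fst p) (snd p))) * (1 + norm z) ^ m"
    by (simp add: sum_distrib_right)
  finally show ?thesis .
qed


lemma big_s:
  fixes C s :: real and n :: nat
  assumes "n \<ge> 1" "C \<ge> 0" "s = 2 * real n + 1 + C * 4 ^ n"
  shows "(s - real n) ^ n > C * (1 + s) ^ (n - 1)"
proof -
  obtain m where n: "n = Suc m" using assms(1) by (cases n) auto
  have s1: "s \<ge> 1" using assms by (simp add: n)
  have h1: "s - real n \<ge> s / 2" using assms by simp
  have h2: "1 + s \<le> 2 * s" using s1 by simp
  have h3: "s / 2 > C * 4 ^ m"
  proof -
    have "C * 4 ^ n = 4 * (C * 4 ^ m)" by (simp add: n)
    moreover have "C * 4 ^ m \<ge> 0" using assms by simp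
    ultimately show ?thesis using assms(3) by linarith
  qed
  have "C * (1 + s) ^ m \<le> C * (2 * s) ^ m"
    using assms(2) s1 h2 by (intro mult_left_mono power_mono) auto
  also have "\<dots> = (C * 4 ^ m) * (s / 2) ^ m"
  proof -
    have "(2 * s) ^ m = (4 * (s / 2)) ^ m" by simp
    also have "\<dots> = 4 ^ m * (s / 2) ^ m" by (rule power_mult_distrib)
    finally show ?thesis by simp
  qed
  also have "\<dots> < (s / 2) * (s / 2) ^ m"
    using h3 s1 by (intro mult_strict_right_mono) auto
  also have "\<dots> = (s / 2) ^ n" by (simp add: n)
  also have "\<dots> \<le> (s - real n) ^ n"
    using h1 s1 by (intro power_mono) auto
  finally show ?thesis by (simp add: n)
qed

lemma construct:
  fixes T :: "real set" and c d :: "nat \<Rightarrow> real" and \<beta> :: real and n :: nat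
  assumes "finite T" "card T \<le> n" "n \<ge> 1" "\<forall>j\<in>{1..n}. d j \<le> real n"
  shows "\<exists>a. is_polyan_coeffs a \<and> polyan_degree a = n \<and>
     polyan_zeros a = {z. \<beta> * (\<Prod>t\<in>T. Re z - t) = 0 \<and> (\<Prod>j\<in>{1..n}. Im z - c j * Re z - d j) = 0}"
proof -
  define F where "F z = of_real \<beta> * (\<Prod>t\<in>T. of_real (Re z) - of_real t) +
     \<i> * (\<Prod>j\<in>{1..n}. of_real (Im z) - of_real (c j) * of_real (Re z) - of_real (d j))" for z
  have ReF: "Re (F z) = \<beta> * (\<Prod>t\<in>T. Re z - t)" for z
  proof -
    have "F z = Complex (\<beta> * (\<Prod>t\<in>T. Re z - t)) (\<Prod>j\<in>{1..n}. Im z - c j * Re z - d j)"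
      unfolding F_def by (simp add: Complex_eq)
    then show ?thesis by (simp only: complex.sel)
  qed
  have ImF: "Im (F z) = (\<Prod>j\<in>{1..n}. Im z - c j * Re z - d j)" for z
  proof -
    have "F z = Complex (\<beta> * (\<Prod>t\<in>T. Re z - t)) (\<Prod>j\<in>{1..n}. Im z - c j * Re z - d j)"
      unfolding F_def by (simp add: Complex_eq)
    then show ?thesis by (simp only: complex.sel)
  qed
  have PA1: "PA n (\<lambda>z. of_real \<beta> * (\<Prod>t\<in>T. of_real (Re z) - of_real t))"
  proof -
    have "\<forall>t\<in>T. PA 1 (\<lambda>z. of_real (Re z) - of_real t)"
      using PA_diff[OF PA_re PA_mono[OF PA_const]] by auto
    then have "PA (0 + card T) (\<lambda>z. of_real \<beta> * (\<Prod>t\<in>T. of_real (Re z) - of_real t))"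
      by (intro PA_mult PA_const PA_prod assms(1))
    then show ?thesis using PA_mono assms(2) by auto
  qed
  have PA2: "PA n (\<lambda>z. \<i> * (\<Prod>j\<in>{1..n}. of_real (Im z) - of_real (c j) * of_real (Re z) - of_real (d j)))"
  proof -
    have "\<forall>j\<in>{1..n}. PA 1 (\<lambda>z. of_real (Im z) - of_real (c j) * of_real (Re z) - of_real (d j))"
    proof
      fix j
      have "PA (0 + 1) (\<lambda>z. of_real (c j) * of_real (Re z))" by (rule PA_mult[OF PA_const PA_re])
      then have "PA 1 (\<lambda>z. of_real (Im z) - of_real (c j) * of_real (Re z))"
        using PA_diff[OF PA_im] by simp
      then show "PA 1 (\<lambda>z. of_real (Im z) - of_real (c j) * of_real (Re z) - of_real (d j))"
        using PA_diff PA_mono[OF PA_const] by auto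
    qed
    then have "PA (0 + card {1..n}) (\<lambda>z. \<i> * (\<Prod>j\<in>{1..n}. of_real (Im z) - of_real (c j) * of_real (Re z) - of_real (d j)))"
      by (intro PA_mult PA_const PA_prod) auto
    then show ?thesis by simp
  qed
  have "PA n F" unfolding F_def by (rule PA_add[OF PA1 PA2])
  then obtain a where fin: "is_polyan_coeffs a" and deg: "polyan_degree a \<le> n"
    and ev: "\<And>z. polyan_eval a z = F z" using PA_to_coeffs by blast
  have zeros: "polyan_zeros a = {z. \<beta> * (\<Prod>t\<in>T. Re z - t) = 0 \<and> (\<Prod>j\<in>{1..n}. Im z - c j * Re z - d j) = 0}"
    unfolding polyan_zeros_def ev
    by (rule Collect_cong) (simp only: complex_eq_iff ReF ImF zero_complex.sel)
  have "polyan_degree a = n"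
  proof (rule ccontr)
    assume "polyan_degree a \<noteq> n"
    then have dm: "polyan_degree a \<le> n - 1" using deg by simp
    define C where "C = (\<Sum>p\<in>polyan_support a. norm (a (fst p) (snd p)))"
    have C0: "C \<ge> 0" unfolding C_def by (simp add: sum_nonneg)
    define s where "s = 2 * real n + 1 + C * 4 ^ n"
    have s0: "s \<ge> real n" unfolding s_def using C0 by simp
    let ?z = "\<i> * of_real s"
    have "norm (F ?z) \<le> C * (1 + norm ?z) ^ (n - 1)"
      using growth[OF fin dm, of ?z] unfolding ev C_def .
    also have "norm ?z = s" using s0 by (simp add: norm_mult)
    finally have A: "norm (F ?z) \<le> C * (1 + s) ^ (n - 1)" .
    have "(s - real n) ^ n = (\<Prod>j\<in>{1..n}. s - real n)" by simp
    also have "\<dots> \<le> (\<Prod>j\<in>{1..n}. \<bar>s - d j\<bar>)"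
    proof (intro prod_mono)
      fix j assume "j \<in> {1..n}"
      then have "d j \<le> real n" using assms(4) by blast
      then show "0 \<le> s - real n \<and> s - real n \<le> \<bar>s - d j\<bar>" using s0 by linarith
    qed
    also have "\<dots> = \<bar>Im (F ?z)\<bar>" by (simp add: ImF abs_prod)
    also have "\<dots> \<le> norm (F ?z)" by (rule abs_Im_le_cmod)
    finally have "(s - real n) ^ n \<le> C * (1 + s) ^ (n - 1)" using A by linarith
    then show False using big_s[OF assms(3) C0 s_def] by linarith
  qed
  then show ?thesis using fin zeros by blast
qed


lemma card_part:
  fixes n q r :: nat
  assumes "n \<ge> 1" "1 \<le> r" "r \<le> n"
  defines "h \<equiv> \<lambda>t j. (n + 1) * j * t + min j r"
  shows "card (\<Union>t\<in>{0..q}. (\<lambda>j. Complex (real t) (real (h t j))) ` {1..n}) = r + q * n"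
proof -
  have "card (\<Union>t\<in>{0..q}. (\<lambda>j. Complex (real t) (real (h t j))) ` {1..n})
      = (\<Sum>t\<in>{0..q}. card ((\<lambda>j. Complex (real t) (real (h t j))) ` {1..n}))"
    by (rule card_UN_disjoint) auto
  also have "\<dots> = (\<Sum>t\<in>{0..q}. if t = 0 then r else n)"
  proof (rule sum.cong[OF refl])
    fix t assume "t \<in> {0..q}"
    show "card ((\<lambda>j. Complex (real t) (real (h t j))) ` {1..n}) = (if t = 0 then r else n)"
    proof (cases "t = 0")
      case True
      have "(\<lambda>j. Complex (real t) (real (h t j))) ` {1..n} = (\<lambda>i. Complex 0 (real i)) ` {1..r}"
      proof safe
        fix j assume "j \<in> {1..n}"
        then show "Complex (real t) (real (h t j)) \<in> (\<lambda>i. Complex 0 (real i)) ` {1..r}"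
          using True assms by (auto simp: h_def intro!: image_eqI[of _ _ "min j r"])
      next
        fix i assume "i \<in> {1..r}"
        then show "Complex 0 (real i) \<in> (\<lambda>j. Complex (real t) (real (h t j))) ` {1..n}"
          using True assms by (auto simp: h_def intro!: image_eqI[of _ _ i])
      qed
      moreover have "card ((\<lambda>i. Complex 0 (real i)) ` {1..r}) = r"
        by (subst card_image) (auto simp: inj_on_def)
      ultimately show ?thesis using True by simp
    next
      case False
      have "strict_mono_on {1..n} (h t)"
      proof (rule strict_mono_onI)
        fix i j assume "i \<in> {1..n}" "j \<in> {1..n}" "i < j"
        then have "(n + 1) * i < (n + 1) * j" using \<open>i < j\<close> by (intro mult_strict_left_mono) auto
        then have "(n + 1) * i * t < (n + 1) * j * t" using False by (intro mult_strict_right_mono) auto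
        moreover have "min i r \<le> min j r" using \<open>i < j\<close> by simp
        ultimately show "h t i < h t j" unfolding h_def by linarith
      qed
      then have "inj_on (h t) {1..n}" by (rule strict_mono_on_imp_inj_on)
      then have "inj_on (\<lambda>j. Complex (real t) (real (h t j))) {1..n}"
      proof -
        assume inj: "inj_on (h t) {1..n}"
        show ?thesis
        proof (rule inj_onI)
          fix x y assume x: "x \<in> {1..n}" and y: "y \<in> {1..n}"
            and eq: "Complex (real t) (real (h t x)) = Complex (real t) (real (h t y))"
          then have "h t x = h t y" by simp
          then show "x = y" using inj x y by (meson inj_onD)
        qed
      qed
      then show ?thesis using False by (simp add: card_image)
    qed
  qed
  also have "\<dots> = r + q * n"
  proof -
    have "{0..q} = insert 0 {1..q}" by auto
    then have "(\<Sum>t\<in>{0..q}. if t = 0 then r else n) = r + (\<Sum>t\<in>{1..q}. if t = 0 then r else n)"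
      by simp
    also have "(\<Sum>t\<in>{1..q}. if t = 0 then r else n) = (\<Sum>t\<in>{1..q}. n)"
      by (rule sum.cong) auto
    finally show ?thesis by simp
  qed
  finally show ?thesis .
qed

theorem theorem2p16:
  fixes n :: nat
  assumes "n \<ge> 1"
  shows "(\<forall>k \<le> n^2. \<exists>a. is_polyan_coeffs a \<and> polyan_degree a = n \<and>
              finite (polyan_zeros a) \<and> card (polyan_zeros a) = k)
         \<and> (\<exists>a. is_polyan_coeffs a \<and> polyan_degree a = n \<and> infinite (polyan_zeros a))"
proof (intro conjI allI impI)
  fix k assume k: "k \<le> n^2"
  show "\<exists>a. is_polyan_coeffs a \<and> polyan_degree a = n \<and> finite (polyan_zeros a) \<and> card (polyan_zeros a) = k"
  proof (cases "k = 0")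
    case True
    obtain a where a: "is_polyan_coeffs a" "polyan_degree a = n"
      "polyan_zeros a = {z. 1 * (\<Prod>t\<in>{}. Re z - t) = 0 \<and> (\<Prod>j\<in>{1..n}. Im z - 0 * Re z - 0) = 0}"
    proof -
      have c0: "card ({}::real set) \<le> n" by simp
      have d0: "\<forall>j\<in>{1..n}. (\<lambda>_. 0::real) j \<le> real n" by simp
      show ?thesis using construct[of "{}" n "\<lambda>_. 0" 1 "\<lambda>_. 0", OF finite.emptyI c0 assms d0] that by blast
    qed
    have "polyan_zeros a = {}" using a(3) by simp
    then show ?thesis using a True by auto
  next
    case False
    define q where "q = (k - 1) div n"
    define r where "r = (k - 1) mod n + 1"
    have npos: "n > 0" using assms by simp
    have r1: "1 \<le> r" and rn: "r \<le> n" using npos by (auto simp: r_def Suc_le_eq)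
    have kq: "k = r + q * n" unfolding q_def r_def using False
      by (metis Suc_pred' add.commute add_Suc_right div_mult_mod_eq mult.commute neq0_conv plus_1_eq_Suc)
    have qn: "q < n"
    proof -
      have "k - 1 < n * n" using k False npos by (simp add: power2_eq_square)
      then show ?thesis unfolding q_def using less_mult_imp_div_less[of "k - 1" n n] by simp
    qed
    define h where "h = (\<lambda>t j. (n + 1) * j * t + min j r)"
    define T where "T = real ` {0..q}"
    have cT: "card T = q + 1" unfolding T_def by (subst card_image) (auto simp: inj_on_def)
    obtain a where a: "is_polyan_coeffs a" "polyan_degree a = n"
      "polyan_zeros a = {z. 1 * (\<Prod>t\<in>T. Re z - t) = 0 \<and>
          (\<Prod>j\<in>{1..n}. Im z - real ((n+1) * j) * Re z - real (min j r)) = 0}"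
    proof -
      have dj: "\<forall>j\<in>{1..n}. real (min j r) \<le> real n" using rn by auto
      have fT: "finite T" unfolding T_def by simp
      have cTn: "card T \<le> n" using cT qn by simp
      show ?thesis using construct[OF fT cTn assms dj, of 1 "\<lambda>j. real ((n+1) * j)"] that by blast
    qed
    have Z: "polyan_zeros a = (\<Union>t\<in>{0..q}. (\<lambda>j. Complex (real t) (real (h t j))) ` {1..n})"
    proof (rule set_eqI, rule iffI)
      fix z assume "z \<in> polyan_zeros a"
      then have z1: "(\<Prod>t\<in>T. Re z - t) = 0" and
        z2: "(\<Prod>j\<in>{1..n}. Im z - real ((n+1) * j) * Re z - real (min j r)) = 0"
        unfolding a(3) by simp_all
      from z1 obtain t where t: "t \<in> {0..q}" "Re z = real t"
        unfolding T_def by (auto simp: prod_zero_iff)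
      from z2 obtain j where j: "j \<in> {1..n}" "Im z - real ((n+1) * j) * Re z - real (min j r) = 0"
        by (auto simp: prod_zero_iff)
      have "Im z = real (h t j)" using j(2) t(2) unfolding h_def by simp
      then have "z = Complex (real t) (real (h t j))"
        using t(2) by (simp add: complex_eq_iff)
      then show "z \<in> (\<Union>t\<in>{0..q}. (\<lambda>j. Complex (real t) (real (h t j))) ` {1..n})"
        using t(1) j(1) by blast
    next
      fix z assume "z \<in> (\<Union>t\<in>{0..q}. (\<lambda>j. Complex (real t) (real (h t j))) ` {1..n})"
      then obtain t j where t: "t \<in> {0..q}" and j: "j \<in> {1..n}" and z: "z = Complex (real t) (real (h t j))"
        by blast
      have "(\<Prod>t\<in>T. Re z - t) = 0"
        using t z unfolding T_def by (auto simp: prod_zero_iff)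
      moreover have "(\<Prod>j\<in>{1..n}. Im z - real ((n+1) * j) * Re z - real (min j r)) = 0"
        using j z unfolding h_def by (auto simp: prod_zero_iff intro!: bexI[of _ j])
      ultimately show "z \<in> polyan_zeros a" unfolding a(3) by simp
    qed
    have "card (polyan_zeros a) = k" unfolding Z h_def kq by (rule card_part[OF assms r1 rn])
    moreover have "finite (polyan_zeros a)" unfolding Z by auto
    ultimately show ?thesis using a(1,2) by blast
  qed
next
  obtain a where a: "is_polyan_coeffs a" "polyan_degree a = n"
    "polyan_zeros a = {z. 0 * (\<Prod>t\<in>{}. Re z - t) = 0 \<and> (\<Prod>j\<in>{1..n}. Im z - 0 * Re z - 1) = 0}"
  proof -
    have c0: "card ({}::real set) \<le> n" by simp
    have d0: "\<forall>j\<in>{1..n}. (\<lambda>_. 1::real) j \<le> real n" using assms by simp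
    show ?thesis using construct[of "{}" n "\<lambda>_. 1" 0 "\<lambda>_. 0", OF finite.emptyI c0 assms d0] that by blast
  qed
  have "range (\<lambda>x::nat. Complex (real x) 1) \<subseteq> polyan_zeros a"
  proof safe
    fix x :: nat
    have "(\<Prod>j\<in>{1..n}. Im (Complex (real x) 1) - 0 * Re (Complex (real x) 1) - 1) = 0"
      using assms by simp
    then show "Complex (real x) 1 \<in> polyan_zeros a" unfolding a(3) by simp
  qed
  moreover have "infinite (range (\<lambda>x::nat. Complex (real x) 1))"
    by (rule range_inj_infinite) (auto simp: inj_def)
  ultimately have "infinite (polyan_zeros a)" by (meson finite_subset)
  then show "\<exists>a. is_polyan_coeffs a \<and> polyan_degree a = n \<and> infinite (polyan_zeros a)"
    using a(1,2) by blast
qed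

end
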